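(* Let $\mathbb C$ be a pointed regular Mal'tsev category with finite limits and finite colimits, and let $W,X,Y$ be objects of $\mathbb C$. Then the morphism $$\langle [\iota_1,\iota_2,0],[\iota_1,0,\iota_2]\rangle\colon W+X+Y\to (W+X)\times_W(W+Y)$$ is a regular epimorphism. In particular, if $\mathbb C$ is a normal Mal'tsev category (with these properties), then this morphism is a normal epimorphism.
   Context: $\iota_i$ denote coproduct injections, $[a,b,c]$ the morphism out of a ternary coproduct with the given components, $\langle a,b\rangle$ pairing into a pullback; $(W+X)\times_W(W+Y)$ is the pullback of $[1,0]\colon W+X\to W$ and $[1,0]\colon W+Y\to W$. A Mal'tsev category is a finitely complete category in which every reflexive relation is an equivalence relation. A normal category is a regular pointed category in which every regular epimorphism is a normal epimorphism (a cokernel of some morphism). *)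

theory Defs
  imports Main
begin

text \<open>A category is given by a set of objects, a set of arrows, domain, codomain,
  identities and composition; Comp C g f denotes g o f (first f, then g).\<close>

record ('o, 'm) cat =
  Ob   :: "'o set"
  Ar   :: "'m set"
  Dom  :: "'m \<Rightarrow> 'o"
  Cod  :: "'m \<Rightarrow> 'o"
  Id   :: "'o \<Rightarrow> 'm"
  Comp :: "'m \<Rightarrow> 'm \<Rightarrow> 'm"

definition hom :: "('o, 'm) cat \<Rightarrow> 'o \<Rightarrow> 'o \<Rightarrow> 'm set" where
  "hom C A B = {f \<in> Ar C. Dom C f = A \<and> Cod C f = B}"

definition category :: "('o, 'm) cat \<Rightarrow> bool" where
  "category C \<longleftrightarrow>
     (\<forall>f \<in> Ar C. Dom C f \<in> Ob C \<and> Cod C f \<in> Ob C)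
   \<and> (\<forall>A \<in> Ob C. Id C A \<in> hom C A A)
   \<and> (\<forall>f \<in> Ar C. \<forall>g \<in> Ar C. Cod C f = Dom C g \<longrightarrow> Comp C g f \<in> hom C (Dom C f) (Cod C g))
   \<and> (\<forall>f \<in> Ar C. Comp C f (Id C (Dom C f)) = f \<and> Comp C (Id C (Cod C f)) f = f)
   \<and> (\<forall>f \<in> Ar C. \<forall>g \<in> Ar C. \<forall>h \<in> Ar C. Cod C f = Dom C g \<longrightarrow> Cod C g = Dom C h \<longrightarrow>
        Comp C h (Comp C g f) = Comp C (Comp C h g) f)"

definition terminal :: "('o, 'm) cat \<Rightarrow> 'o \<Rightarrow> bool" where
  "terminal C T \<longleftrightarrow> T \<in> Ob C \<and> (\<forall>A \<in> Ob C. \<exists>!f. f \<in> hom C A T)"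

definition initial :: "('o, 'm) cat \<Rightarrow> 'o \<Rightarrow> bool" where
  "initial C I \<longleftrightarrow> I \<in> Ob C \<and> (\<forall>A \<in> Ob C. \<exists>!f. f \<in> hom C I A)"

definition zero_object :: "('o, 'm) cat \<Rightarrow> 'o \<Rightarrow> bool" where
  "zero_object C Z \<longleftrightarrow> terminal C Z \<and> initial C Z"

definition pointed :: "('o, 'm) cat \<Rightarrow> bool" where
  "pointed C \<longleftrightarrow> (\<exists>Z. zero_object C Z)"

definition zero_mor :: "('o, 'm) cat \<Rightarrow> 'm \<Rightarrow> bool" where
  "zero_mor C f \<longleftrightarrow> f \<in> Ar C \<and>
     (\<exists>Z g h. zero_object C Z \<and> g \<in> hom C (Dom C f) Z \<and> h \<in> hom C Z (Cod C f) \<and> f = Comp C h g)"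

definition pullback :: "('o, 'm) cat \<Rightarrow> 'm \<Rightarrow> 'm \<Rightarrow> 'o \<Rightarrow> 'm \<Rightarrow> 'm \<Rightarrow> bool" where
  "pullback C f g P p1 p2 \<longleftrightarrow>
     f \<in> Ar C \<and> g \<in> Ar C \<and> Cod C f = Cod C g \<and>
     p1 \<in> hom C P (Dom C f) \<and> p2 \<in> hom C P (Dom C g) \<and> Comp C f p1 = Comp C g p2 \<and>
     (\<forall>Q q1 q2. q1 \<in> hom C Q (Dom C f) \<longrightarrow> q2 \<in> hom C Q (Dom C g) \<longrightarrow> Comp C f q1 = Comp C g q2 \<longrightarrow>
        (\<exists>!u. u \<in> hom C Q P \<and> Comp C p1 u = q1 \<and> Comp C p2 u = q2))"

definition pushout :: "('o, 'm) cat \<Rightarrow> 'm \<Rightarrow> 'm \<Rightarrow> 'o \<Rightarrow> 'm \<Rightarrow> 'm \<Rightarrow> bool" where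
  "pushout C f g P p1 p2 \<longleftrightarrow>
     f \<in> Ar C \<and> g \<in> Ar C \<and> Dom C f = Dom C g \<and>
     p1 \<in> hom C (Cod C f) P \<and> p2 \<in> hom C (Cod C g) P \<and> Comp C p1 f = Comp C p2 g \<and>
     (\<forall>Q q1 q2. q1 \<in> hom C (Cod C f) Q \<longrightarrow> q2 \<in> hom C (Cod C g) Q \<longrightarrow> Comp C q1 f = Comp C q2 g \<longrightarrow>
        (\<exists>!u. u \<in> hom C P Q \<and> Comp C u p1 = q1 \<and> Comp C u p2 = q2))"

text \<open>Finite limits: a terminal object and all pullbacks (standard characterisation).\<close>
definition has_finite_limits :: "('o, 'm) cat \<Rightarrow> bool" where
  "has_finite_limits C \<longleftrightarrow> (\<exists>T. terminal C T) \<and>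
     (\<forall>f \<in> Ar C. \<forall>g \<in> Ar C. Cod C f = Cod C g \<longrightarrow> (\<exists>P p1 p2. pullback C f g P p1 p2))"

definition has_finite_colimits :: "('o, 'm) cat \<Rightarrow> bool" where
  "has_finite_colimits C \<longleftrightarrow> (\<exists>I. initial C I) \<and>
     (\<forall>f \<in> Ar C. \<forall>g \<in> Ar C. Dom C f = Dom C g \<longrightarrow> (\<exists>P p1 p2. pushout C f g P p1 p2))"

definition coequalizer :: "('o, 'm) cat \<Rightarrow> 'm \<Rightarrow> 'm \<Rightarrow> 'm \<Rightarrow> bool" where
  "coequalizer C f g q \<longleftrightarrow>
     f \<in> Ar C \<and> g \<in> Ar C \<and> Dom C f = Dom C g \<and> Cod C f = Cod C g \<and>
     q \<in> Ar C \<and> Dom C q = Cod C f \<and> Comp C q f = Comp C q g \<and>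
     (\<forall>h \<in> Ar C. Dom C h = Cod C f \<longrightarrow> Comp C h f = Comp C h g \<longrightarrow>
        (\<exists>!u. u \<in> hom C (Cod C q) (Cod C h) \<and> Comp C u q = h))"

definition regular_epi :: "('o, 'm) cat \<Rightarrow> 'm \<Rightarrow> bool" where
  "regular_epi C q \<longleftrightarrow> (\<exists>f g. coequalizer C f g q)"

definition normal_epi :: "('o, 'm) cat \<Rightarrow> 'm \<Rightarrow> bool" where
  "normal_epi C q \<longleftrightarrow> (\<exists>k z. zero_mor C z \<and> coequalizer C k z q)"

definition regular_category :: "('o, 'm) cat \<Rightarrow> bool" where
  "regular_category C \<longleftrightarrow> category C \<and> has_finite_limits C
   \<and> (\<forall>f \<in> Ar C. \<forall>P p1 p2. pullback C f f P p1 p2 \<longrightarrow> (\<exists>q. coequalizer C p1 p2 q))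
   \<and> (\<forall>f g P p1 p2. regular_epi C f \<longrightarrow> pullback C f g P p1 p2 \<longrightarrow> regular_epi C p2)"

definition relation_on :: "('o, 'm) cat \<Rightarrow> 'o \<Rightarrow> 'm \<Rightarrow> 'm \<Rightarrow> bool" where
  "relation_on C X r1 r2 \<longleftrightarrow>
     r1 \<in> hom C (Dom C r1) X \<and> r2 \<in> hom C (Dom C r1) X \<and>
     (\<forall>g h. g \<in> Ar C \<longrightarrow> h \<in> Ar C \<longrightarrow> Dom C g = Dom C h \<longrightarrow> Cod C g = Dom C r1 \<longrightarrow> Cod C h = Dom C r1 \<longrightarrow>
        Comp C r1 g = Comp C r1 h \<longrightarrow> Comp C r2 g = Comp C r2 h \<longrightarrow> g = h)"

text \<open>Generalised elements: (x, y) lies in the relation if it factors through (r1, r2).\<close>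
definition rel_mem :: "('o, 'm) cat \<Rightarrow> 'm \<Rightarrow> 'm \<Rightarrow> 'm \<Rightarrow> 'm \<Rightarrow> bool" where
  "rel_mem C r1 r2 x y \<longleftrightarrow>
     (\<exists>h \<in> Ar C. Cod C h = Dom C r1 \<and> Comp C r1 h = x \<and> Comp C r2 h = y)"

definition reflexive_rel :: "('o, 'm) cat \<Rightarrow> 'o \<Rightarrow> 'm \<Rightarrow> 'm \<Rightarrow> bool" where
  "reflexive_rel C X r1 r2 \<longleftrightarrow>
     (\<exists>d \<in> hom C X (Dom C r1). Comp C r1 d = Id C X \<and> Comp C r2 d = Id C X)"

definition symmetric_rel :: "('o, 'm) cat \<Rightarrow> 'm \<Rightarrow> 'm \<Rightarrow> bool" where
  "symmetric_rel C r1 r2 \<longleftrightarrow> (\<forall>x y. rel_mem C r1 r2 x y \<longrightarrow> rel_mem C r1 r2 y x)"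

definition transitive_rel :: "('o, 'm) cat \<Rightarrow> 'm \<Rightarrow> 'm \<Rightarrow> bool" where
  "transitive_rel C r1 r2 \<longleftrightarrow>
     (\<forall>x y z. rel_mem C r1 r2 x y \<longrightarrow> rel_mem C r1 r2 y z \<longrightarrow> rel_mem C r1 r2 x z)"

definition maltsev :: "('o, 'm) cat \<Rightarrow> bool" where
  "maltsev C \<longleftrightarrow> category C \<and> has_finite_limits C \<and>
     (\<forall>X r1 r2. relation_on C X r1 r2 \<longrightarrow> reflexive_rel C X r1 r2 \<longrightarrow>
        symmetric_rel C r1 r2 \<and> transitive_rel C r1 r2)"

definition normal_category :: "('o, 'm) cat \<Rightarrow> bool" where
  "normal_category C \<longleftrightarrow> regular_category C \<and> pointed C \<and>
     (\<forall>q. regular_epi C q \<longrightarrow> normal_epi C q)"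

definition coproduct2 :: "('o, 'm) cat \<Rightarrow> 'o \<Rightarrow> 'o \<Rightarrow> 'o \<Rightarrow> 'm \<Rightarrow> 'm \<Rightarrow> bool" where
  "coproduct2 C A B S i1 i2 \<longleftrightarrow> i1 \<in> hom C A S \<and> i2 \<in> hom C B S \<and>
     (\<forall>T f g. f \<in> hom C A T \<longrightarrow> g \<in> hom C B T \<longrightarrow>
        (\<exists>!u. u \<in> hom C S T \<and> Comp C u i1 = f \<and> Comp C u i2 = g))"

definition coproduct3 :: "('o, 'm) cat \<Rightarrow> 'o \<Rightarrow> 'o \<Rightarrow> 'o \<Rightarrow> 'o \<Rightarrow> 'm \<Rightarrow> 'm \<Rightarrow> 'm \<Rightarrow> bool" where
  "coproduct3 C A B D S i1 i2 i3 \<longleftrightarrow> i1 \<in> hom C A S \<and> i2 \<in> hom C B S \<and> i3 \<in> hom C D S \<and>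
     (\<forall>T f g h. f \<in> hom C A T \<longrightarrow> g \<in> hom C B T \<longrightarrow> h \<in> hom C D T \<longrightarrow>
        (\<exists>!u. u \<in> hom C S T \<and> Comp C u i1 = f \<and> Comp C u i2 = g \<and> Comp C u i3 = h))"

end

theory Submission
  imports Defs
begin


locale cctx = fixes C :: "('o,'m) cat" assumes cat: "category C"
begin

lemma hom_iff: "f \<in> hom C A B \<longleftrightarrow> f \<in> Ar C \<and> Dom C f = A \<and> Cod C f = B"
  by (simp add: hom_def)

lemma dom_ob [simp]: "f \<in> Ar C \<Longrightarrow> Dom C f \<in> Ob C"
  using cat unfolding category_def by blast
lemma cod_ob [simp]: "f \<in> Ar C \<Longrightarrow> Cod C f \<in> Ob C"
  using cat unfolding category_def by blast

lemma id_ar [simp]: "A \<in> Ob C \<Longrightarrow> Id C A \<in> Ar C"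
  using cat unfolding category_def hom_def by blast
lemma id_dom [simp]: "A \<in> Ob C \<Longrightarrow> Dom C (Id C A) = A"
  using cat unfolding category_def hom_def by blast
lemma id_cod [simp]: "A \<in> Ob C \<Longrightarrow> Cod C (Id C A) = A"
  using cat unfolding category_def hom_def by blast

lemma comp_ar [simp]: "f \<in> Ar C \<Longrightarrow> g \<in> Ar C \<Longrightarrow> Cod C f = Dom C g \<Longrightarrow> Comp C g f \<in> Ar C"
  using cat unfolding category_def hom_def by blast
lemma comp_dom [simp]: "f \<in> Ar C \<Longrightarrow> g \<in> Ar C \<Longrightarrow> Cod C f = Dom C g \<Longrightarrow> Dom C (Comp C g f) = Dom C f"
  using cat unfolding category_def hom_def by blast
lemma comp_cod [simp]: "f \<in> Ar C \<Longrightarrow> g \<in> Ar C \<Longrightarrow> Cod C f = Dom C g \<Longrightarrow> Cod C (Comp C g f) = Cod C g"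
  using cat unfolding category_def hom_def by blast

lemma id_l [simp]: "f \<in> Ar C \<Longrightarrow> Cod C f = B \<Longrightarrow> Comp C (Id C B) f = f"
  using cat unfolding category_def by blast
lemma id_r [simp]: "f \<in> Ar C \<Longrightarrow> Dom C f = A \<Longrightarrow> Comp C f (Id C A) = f"
  using cat unfolding category_def by blast

lemma assoc [simp]: "f \<in> Ar C \<Longrightarrow> g \<in> Ar C \<Longrightarrow> h \<in> Ar C \<Longrightarrow> Cod C f = Dom C g \<Longrightarrow> Cod C g = Dom C h \<Longrightarrow>
   Comp C (Comp C h g) f = Comp C h (Comp C g f)"
  using cat unfolding category_def by metis

lemma zero_unique:
  assumes "zero_mor C f" "zero_mor C g" "Dom C f = Dom C g" "Cod C f = Cod C g"
  shows "f = g"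
proof -
  obtain Z g1 h1 where z1: "zero_object C Z" "g1 \<in> hom C (Dom C f) Z" "h1 \<in> hom C Z (Cod C f)" "f = Comp C h1 g1"
    using assms(1) unfolding zero_mor_def by blast
  obtain Z' g2 h2 where z2: "zero_object C Z'" "g2 \<in> hom C (Dom C g) Z'" "h2 \<in> hom C Z' (Cod C g)" "g = Comp C h2 g2"
    using assms(2) unfolding zero_mor_def by blast
  have ZO: "Z \<in> Ob C" "Z' \<in> Ob C" using z1(1) z2(1) unfolding zero_object_def terminal_def by auto
  obtain k where k: "k \<in> hom C Z Z'" using z1(1) ZO unfolding zero_object_def initial_def by blast
  have A: "Dom C f \<in> Ob C" "Cod C f \<in> Ob C" using z1(2,3) unfolding hom_iff by (metis dom_ob, metis cod_ob)
  have "Comp C k g1 \<in> hom C (Dom C f) Z'" using k z1(2) by (auto simp: hom_iff)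
  moreover have "\<exists>!x. x \<in> hom C (Dom C f) Z'" using z2(1) A unfolding zero_object_def terminal_def by blast
  ultimately have e1: "g2 = Comp C k g1" using z2(2) assms(3) by auto
  have "Comp C h2 k \<in> hom C Z (Cod C f)" using k z2(3) assms(4) by (auto simp: hom_iff)
  moreover have "\<exists>!x. x \<in> hom C Z (Cod C f)" using z1(1) A unfolding zero_object_def initial_def by blast
  ultimately have e2: "h1 = Comp C h2 k" using z1(3) by auto
  have t: "g1 \<in> Ar C" "k \<in> Ar C" "h2 \<in> Ar C" "Cod C g1 = Dom C k" "Cod C k = Dom C h2"
    using z1(2) k z2(3) by (auto simp: hom_iff)
  have "g = Comp C h2 (Comp C k g1)" using z2(4) e1 by simp
  also have "\<dots> = Comp C (Comp C h2 k) g1" using assoc[OF t] by simp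
  also have "\<dots> = f" using e2 z1(4) by simp
  finally show ?thesis by simp
qed

lemma zero_post:
  assumes "zero_mor C f" "h \<in> Ar C" "Dom C h = Cod C f"
  shows "zero_mor C (Comp C h f)"
proof -
  obtain Z g1 h1 where z1: "zero_object C Z" "g1 \<in> hom C (Dom C f) Z" "h1 \<in> hom C Z (Cod C f)" "f = Comp C h1 g1"
    using assms(1) unfolding zero_mor_def by blast
  have fa: "f \<in> Ar C" using assms(1) unfolding zero_mor_def by blast
  have t: "g1 \<in> Ar C" "h1 \<in> Ar C" "h \<in> Ar C" "Cod C g1 = Dom C h1" "Cod C h1 = Dom C h"
    using z1(2,3) assms by (auto simp: hom_iff)
  have d: "Dom C (Comp C h f) = Dom C f" "Cod C (Comp C h f) = Cod C h" using fa assms by simp_all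
  have "Comp C h f = Comp C (Comp C h h1) g1" using assoc[OF t] z1(4) by simp
  moreover have "Comp C h h1 \<in> hom C Z (Cod C (Comp C h f))" using t z1(3) d by (simp add: hom_iff)
  moreover have "g1 \<in> hom C (Dom C (Comp C h f)) Z" using z1(2) d by simp
  moreover have "Comp C h f \<in> Ar C" using fa assms by simp
  ultimately show ?thesis unfolding zero_mor_def using z1(1) by blast
qed

lemma coeq_facts:
  assumes "coequalizer C f g q"
  shows "f \<in> Ar C" "g \<in> Ar C" "Dom C f = Dom C g" "Cod C f = Cod C g" "q \<in> Ar C"
    "Dom C q = Cod C f" "Comp C q f = Comp C q g"
  using assms unfolding coequalizer_def by blast+

lemma coeq_univ:
  assumes "coequalizer C f g q" "h \<in> Ar C" "Dom C h = Cod C f" "Comp C h f = Comp C h g"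
  shows "\<exists>!u. u \<in> hom C (Cod C q) (Cod C h) \<and> Comp C u q = h"
proof -
  have "\<forall>h \<in> Ar C. Dom C h = Cod C f \<longrightarrow> Comp C h f = Comp C h g \<longrightarrow>
        (\<exists>!u. u \<in> hom C (Cod C q) (Cod C h) \<and> Comp C u q = h)"
    using assms(1) unfolding coequalizer_def by blast
  then show ?thesis using assms(2-4) by blast
qed

lemma coeq_epi:
  assumes "coequalizer C f g q" "a \<in> Ar C" "b \<in> Ar C" "Dom C a = Cod C q" "Dom C b = Cod C q"
    "Cod C a = Cod C b" "Comp C a q = Comp C b q"
  shows "a = b"
proof -
  note q = coeq_facts[OF assms(1)]
  have h1: "Comp C a q \<in> Ar C" using q(5) assms(2,4) by simp
  have h2: "Dom C (Comp C a q) = Cod C f" using q(5,6) assms(2,4) by simp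
  have h3: "Cod C (Comp C a q) = Cod C a" using q(5) assms(2,4) by simp
  have "Comp C (Comp C a q) f = Comp C a (Comp C q f)" using assoc[of f q a] q assms(2,4) by simp
  also have "\<dots> = Comp C a (Comp C q g)" using q(7) by simp
  also have "\<dots> = Comp C (Comp C a q) g" using assoc[of g q a] q assms(2,4) by simp
  finally have h4: "Comp C (Comp C a q) f = Comp C (Comp C a q) g" .
  have U: "\<exists>!u. u \<in> hom C (Cod C q) (Cod C (Comp C a q)) \<and> Comp C u q = Comp C a q"
    using coeq_univ[OF assms(1) h1 h2 h4] .
  have A: "a \<in> hom C (Cod C q) (Cod C (Comp C a q))" using assms(2,4) h3 by (simp add: hom_iff)
  have B: "b \<in> hom C (Cod C q) (Cod C (Comp C a q))" using assms(3,5,6) h3 by (simp add: hom_iff)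
  show ?thesis using U A B assms(7) by (metis (no_types, lifting))
qed

lemma regepi_epi:
  assumes "regular_epi C q" "a \<in> Ar C" "b \<in> Ar C" "Dom C a = Cod C q" "Dom C b = Cod C q"
    "Cod C a = Cod C b" "Comp C a q = Comp C b q"
  shows "a = b"
proof -
  obtain f g where "coequalizer C f g q" using assms(1) unfolding regular_epi_def by blast
  from coeq_epi[OF this assms(2-7)] show ?thesis .
qed

lemma regepi_ar: "regular_epi C q \<Longrightarrow> q \<in> Ar C"
  unfolding regular_epi_def coequalizer_def by blast

lemma pb_facts:
  assumes "pullback C f g P p1 p2"
  shows "f \<in> Ar C" "g \<in> Ar C" "Cod C f = Cod C g" "p1 \<in> Ar C" "Dom C p1 = P" "Cod C p1 = Dom C f"
    "p2 \<in> Ar C" "Dom C p2 = P" "Cod C p2 = Dom C g" "Comp C f p1 = Comp C g p2"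
proof -
  have "f \<in> Ar C \<and> g \<in> Ar C \<and> Cod C f = Cod C g \<and>
     p1 \<in> hom C P (Dom C f) \<and> p2 \<in> hom C P (Dom C g) \<and> Comp C f p1 = Comp C g p2"
    using assms unfolding pullback_def by blast
  then show "f \<in> Ar C" "g \<in> Ar C" "Cod C f = Cod C g" "p1 \<in> Ar C" "Dom C p1 = P" "Cod C p1 = Dom C f"
    "p2 \<in> Ar C" "Dom C p2 = P" "Cod C p2 = Dom C g" "Comp C f p1 = Comp C g p2"
    unfolding hom_def by simp_all
qed

lemma pb_ex:
  assumes "pullback C f g P p1 p2" "q1 \<in> Ar C" "q2 \<in> Ar C" "Dom C q1 = Dom C q2"
    "Cod C q1 = Dom C f" "Cod C q2 = Dom C g" "Comp C f q1 = Comp C g q2"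
  shows "\<exists>u. u \<in> Ar C \<and> Dom C u = Dom C q1 \<and> Cod C u = P \<and> Comp C p1 u = q1 \<and> Comp C p2 u = q2"
proof -
  have H: "\<forall>Q q1 q2. q1 \<in> hom C Q (Dom C f) \<longrightarrow> q2 \<in> hom C Q (Dom C g) \<longrightarrow> Comp C f q1 = Comp C g q2 \<longrightarrow>
        (\<exists>!u. u \<in> hom C Q P \<and> Comp C p1 u = q1 \<and> Comp C p2 u = q2)"
    using assms(1) unfolding pullback_def by blast
  have "q1 \<in> hom C (Dom C q1) (Dom C f)" "q2 \<in> hom C (Dom C q1) (Dom C g)"
    using assms by (simp_all add: hom_def)
  from H[rule_format, OF this assms(7)]
  have "\<exists>!u. u \<in> hom C (Dom C q1) P \<and> Comp C p1 u = q1 \<and> Comp C p2 u = q2" .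
  then show ?thesis unfolding hom_def by blast
qed

lemma pb_uniq:
  assumes "pullback C f g P p1 p2" "x \<in> Ar C" "y \<in> Ar C" "Dom C x = Dom C y" "Cod C x = P" "Cod C y = P"
    "Comp C p1 x = Comp C p1 y" "Comp C p2 x = Comp C p2 y"
  shows "x = y"
proof -
  note F = pb_facts[OF assms(1)]
  have H: "\<forall>Q q1 q2. q1 \<in> hom C Q (Dom C f) \<longrightarrow> q2 \<in> hom C Q (Dom C g) \<longrightarrow> Comp C f q1 = Comp C g q2 \<longrightarrow>
        (\<exists>!u. u \<in> hom C Q P \<and> Comp C p1 u = q1 \<and> Comp C p2 u = q2)"
    using assms(1) unfolding pullback_def by blast
  have "Comp C f (Comp C p1 x) = Comp C (Comp C f p1) x"
    using assoc[of x p1 f] F assms(2,5) by simp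
  also have "\<dots> = Comp C (Comp C g p2) x" using F(10) by simp
  also have "\<dots> = Comp C g (Comp C p2 x)"
    using assoc[of x p2 g] F assms(2,5) by simp
  finally have c: "Comp C f (Comp C p1 x) = Comp C g (Comp C p2 x)" .
  have a: "Comp C p1 x \<in> hom C (Dom C x) (Dom C f)" using F assms(2,5) by (simp add: hom_iff)
  have b: "Comp C p2 x \<in> hom C (Dom C x) (Dom C g)" using F assms(2,5) by (simp add: hom_iff)
  have U: "\<exists>!u. u \<in> hom C (Dom C x) P \<and> Comp C p1 u = Comp C p1 x \<and> Comp C p2 u = Comp C p2 x"
    using H a b c by blast
  have X: "x \<in> hom C (Dom C x) P" using assms by (simp add: hom_iff)
  have Y: "y \<in> hom C (Dom C x) P" using assms by (simp add: hom_iff)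
  show ?thesis using U X Y assms(7,8) by (metis (no_types, lifting))
qed

end




context cctx begin

lemma ext2:
  assumes "Comp C a b = c" "a \<in> Ar C" "b \<in> Ar C" "x \<in> Ar C" "Cod C b = Dom C a" "Cod C x = Dom C b"
  shows "Comp C a (Comp C b x) = Comp C c x"
  using assoc[of x b a] assms by simp

lemma fl_pb:
  assumes "has_finite_limits C" "f \<in> Ar C" "g \<in> Ar C" "Cod C f = Cod C g"
  shows "\<exists>P p1 p2. pullback C f g P p1 p2"
proof -
  have "\<forall>f \<in> Ar C. \<forall>g \<in> Ar C. Cod C f = Cod C g \<longrightarrow> (\<exists>P p1 p2. pullback C f g P p1 p2)"
    using assms(1) unfolding has_finite_limits_def by blast
  then show ?thesis using assms(2-4) by blast
qed

lemma reg_stable: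
  assumes "regular_category C" "regular_epi C f" "pullback C f g P p1 p2"
  shows "regular_epi C p2"
proof -
  have "\<forall>f g P p1 p2. regular_epi C f \<longrightarrow> pullback C f g P p1 p2 \<longrightarrow> regular_epi C p2"
    using assms(1) unfolding regular_category_def by blast
  then show ?thesis using assms(2,3) by blast
qed

lemma reg_coeq:
  assumes "regular_category C" "f \<in> Ar C" "pullback C f f P p1 p2"
  shows "\<exists>q. coequalizer C p1 p2 q"
proof -
  have "\<forall>f \<in> Ar C. \<forall>P p1 p2. pullback C f f P p1 p2 \<longrightarrow> (\<exists>q. coequalizer C p1 p2 q)"
    using assms(1) unfolding regular_category_def by blast
  then show ?thesis using assms(2,3) by blast
qed

lemma image_mono:
  assumes reg: "regular_category C" and kp: "pullback C m m K k1 k2" and cq: "coequalizer C k1 k2 q"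
    and j: "j \<in> Ar C" "Dom C j = Cod C q" "Comp C j q = m"
    and g: "g \<in> Ar C" "h \<in> Ar C" "Dom C g = Dom C h" "Cod C g = Cod C q" "Cod C h = Cod C q"
      "Comp C j g = Comp C j h"
  shows "g = h"
proof -
  note KP = pb_facts[OF kp] and CQ = coeq_facts[OF cq]
  have lim: "has_finite_limits C" using reg unfolding regular_category_def by (elim conjE)
  have rq: "regular_epi C q" unfolding regular_epi_def using cq by blast
  have Dq: "Dom C q = Dom C m" using CQ(6) KP(6) by simp
  obtain Z1 x gt where pb1: "pullback C q g Z1 x gt" using fl_pb[OF lim CQ(5) g(1)] g(4) by auto
  note P1 = pb_facts[OF pb1]
  have rgt: "regular_epi C gt" using reg_stable[OF reg rq pb1] .
  have hg: "Comp C h gt \<in> Ar C" "Cod C (Comp C h gt) = Cod C q" "Dom C (Comp C h gt) = Z1"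
    using P1(7,8,9) g(2,3,5) by simp_all
  obtain Z2 y gh where pb2: "pullback C q (Comp C h gt) Z2 y gh"
    using fl_pb[OF lim CQ(5) hg(1)] hg(2) by auto
  note P2 = pb_facts[OF pb2]
  have rgh: "regular_epi C gh" using reg_stable[OF reg rq pb2] .
  have ty: "x \<in> Ar C" "gh \<in> Ar C" "gt \<in> Ar C" "y \<in> Ar C" "Cod C gh = Z1" "Cod C x = Dom C q"
     "Dom C x = Z1" "Cod C gt = Dom C g" "Dom C gt = Z1" "Cod C y = Dom C q" "Dom C y = Z2" "Dom C gh = Z2"
    using P1(4,5,6,7,8,9) P2(4,5,6,7,8,9) hg(3) by simp_all
  have E1: "Comp C q (Comp C x gh) = Comp C g (Comp C gt gh)"
  proof -
    have "Comp C q (Comp C x gh) = Comp C (Comp C q x) gh" using assoc[of gh x q] ty CQ(5) by simp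
    also have "\<dots> = Comp C (Comp C g gt) gh" using P1(10) by simp
    also have "\<dots> = Comp C g (Comp C gt gh)" using assoc[of gh gt g] ty g(1) by simp
    finally show ?thesis .
  qed
  have E2: "Comp C q y = Comp C h (Comp C gt gh)"
    using P2(10) assoc[of gh gt h] ty g(2,3) by simp
  have "Comp C m (Comp C x gh) = Comp C j (Comp C q (Comp C x gh))"
    using assoc[of "Comp C x gh" q j] j(1,2) ty CQ(5) j(3) by simp
  also have "\<dots> = Comp C j (Comp C g (Comp C gt gh))" using E1 by simp
  also have "\<dots> = Comp C (Comp C j g) (Comp C gt gh)"
    using assoc[of "Comp C gt gh" g j] j(1,2) g(1,4) ty by simp
  also have "\<dots> = Comp C (Comp C j h) (Comp C gt gh)" using g(6) by simp
  also have "\<dots> = Comp C j (Comp C h (Comp C gt gh))"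
    using assoc[of "Comp C gt gh" h j] j(1,2) g(2,3,5) ty by simp
  also have "\<dots> = Comp C j (Comp C q y)" using E2 by simp
  also have "\<dots> = Comp C m y" using assoc[of y q j] j ty CQ(5) by simp
  finally have Em: "Comp C m (Comp C x gh) = Comp C m y" .
  have xg: "Comp C x gh \<in> Ar C" "Dom C (Comp C x gh) = Z2" "Cod C (Comp C x gh) = Dom C m"
    using ty Dq by simp_all
  obtain w where w: "w \<in> Ar C" "Dom C w = Dom C (Comp C x gh)" "Cod C w = K"
      "Comp C k1 w = Comp C x gh" "Comp C k2 w = y"
    using pb_ex[OF kp xg(1) ty(4)] xg ty Dq Em by auto
  have wt: "Cod C w = Dom C k1" "Cod C w = Dom C k2" using w(3) KP by simp_all
  have "Comp C q (Comp C x gh) = Comp C q (Comp C k1 w)" using w(4) by simp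
  also have "\<dots> = Comp C (Comp C q k1) w" using assoc[of w k1 q] w(1) wt KP CQ by simp
  also have "\<dots> = Comp C (Comp C q k2) w" using CQ(7) by simp
  also have "\<dots> = Comp C q (Comp C k2 w)" using assoc[of w k2 q] w(1) wt KP CQ by simp
  also have "\<dots> = Comp C q y" using w(5) by simp
  finally have "Comp C g (Comp C gt gh) = Comp C h (Comp C gt gh)" using E1 E2 by simp
  then have X: "Comp C (Comp C g gt) gh = Comp C (Comp C h gt) gh"
    using assoc[of gh gt g] assoc[of gh gt h] ty g(1-5) by simp
  have Y: "Comp C g gt = Comp C h gt"
    by (rule regepi_epi[OF rgh _ _ _ _ _ X]) (use ty g(1-5) in simp_all)
  show "g = h" by (rule regepi_epi[OF rgt _ _ _ _ _ Y]) (use ty g(1-5) in simp_all)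
qed

end



context cctx begin

lemma ext3:
  assumes "Comp C a (Comp C b c) = d" "a \<in> Ar C" "b \<in> Ar C" "c \<in> Ar C" "x \<in> Ar C"
    "Cod C b = Dom C a" "Cod C c = Dom C b" "Cod C x = Dom C c"
  shows "Comp C a (Comp C b (Comp C c x)) = Comp C d x"
proof -
  have "Comp C a (Comp C b (Comp C c x)) = Comp C a (Comp C (Comp C b c) x)"
    using assoc[of x c b] assms by simp
  also have "\<dots> = Comp C (Comp C a (Comp C b c)) x"
    using assoc[of x "Comp C b c" a] assms by simp
  finally show ?thesis using assms(1) by simp
qed

lemma maltsev_sub:
  assumes mal: "maltsev C" and T: "pullback C e e' T p1 p2"
   and a1: "a1 \<in> Ar C" "Dom C a1 = Cod C e" "Cod C a1 = Dom C e" "Comp C e a1 = Id C (Cod C e)"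
   and b1: "b1 \<in> Ar C" "Dom C b1 = Cod C e" "Cod C b1 = Dom C e'" "Comp C e' b1 = Id C (Cod C e)"
   and j: "j \<in> Ar C" "Cod C j = T"
   and mono: "\<And>g h. g \<in> Ar C \<Longrightarrow> h \<in> Ar C \<Longrightarrow> Dom C g = Dom C h \<Longrightarrow> Cod C g = Dom C j \<Longrightarrow>
        Cod C h = Dom C j \<Longrightarrow> Comp C j g = Comp C j h \<Longrightarrow> g = h"
   and s1: "s1 \<in> Ar C" "Dom C s1 = Dom C e" "Cod C s1 = Dom C j"
      "Comp C p1 (Comp C j s1) = Id C (Dom C e)" "Comp C p2 (Comp C j s1) = Comp C b1 e"
   and s2: "s2 \<in> Ar C" "Dom C s2 = Dom C e'" "Cod C s2 = Dom C j"
      "Comp C p1 (Comp C j s2) = Comp C a1 e'" "Comp C p2 (Comp C j s2) = Id C (Dom C e')"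
  shows "\<exists>t. t \<in> Ar C \<and> Dom C t = T \<and> Cod C t = Dom C j \<and> Comp C j t = Id C T"
proof -
  note TF = pb_facts[OF T]
  have lim: "has_finite_limits C" using mal unfolding maltsev_def by (elim conjE)
  have tys: "e \<in> Ar C" "e' \<in> Ar C" "Cod C e' = Cod C e" "p1 \<in> Ar C" "Dom C p1 = T" "Cod C p1 = Dom C e"
    "p2 \<in> Ar C" "Dom C p2 = T" "Cod C p2 = Dom C e'" using TF(1-9) by simp_all
  note ty0 = tys a1(1-3) b1(1-3) j s1(1-3) s2(1-3)
  have eq0: "Comp C e (Comp C p1 j) = Comp C e' (Comp C p2 j)"
  proof -
    have "Comp C e (Comp C p1 j) = Comp C (Comp C e p1) j" using assoc[of j p1 e] ty0 by simp
    also have "\<dots> = Comp C (Comp C e' p2) j" using TF(10) by simp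
    also have "\<dots> = Comp C e' (Comp C p2 j)" using assoc[of j p2 e'] ty0 by simp
    finally show ?thesis .
  qed
  let ?eps = "Comp C e (Comp C p1 j)"
  have epst: "?eps \<in> Ar C" "Dom C ?eps = Dom C j" "Cod C ?eps = Cod C e" using ty0 by simp_all
  obtain L l1 l2 where Lpb: "pullback C ?eps ?eps L l1 l2" using fl_pb[OF lim epst(1) epst(1)] by blast
  note LF = pb_facts[OF Lpb]
  have tyL: "l1 \<in> Ar C" "Dom C l1 = L" "Cod C l1 = Dom C j" "l2 \<in> Ar C" "Dom C l2 = L" "Cod C l2 = Dom C j"
    using LF(4-9) epst by simp_all
  have Leq: "Comp C e (Comp C p1 (Comp C j l1)) = Comp C e (Comp C p1 (Comp C j l2))"
    using LF(10) assoc[of l1 "Comp C p1 j" e] assoc[of l1 j p1] assoc[of l2 "Comp C p1 j" e] assoc[of l2 j p1] ty0 tyL by simp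
  have Geq: "Comp C e (Comp C p1 (Comp C j l1)) = Comp C e' (Comp C p2 (Comp C j l2))"
    using Leq ext2[OF eq0, of l2] assoc[of l2 j p2] assoc[of l2 j p1] ty0 tyL by simp
  obtain G where G: "G \<in> Ar C" "Dom C G = Dom C (Comp C (Comp C p1 j) l1)" "Cod C G = T"
      "Comp C p1 G = Comp C (Comp C p1 j) l1" "Comp C p2 G = Comp C (Comp C p2 j) l2"
    using pb_ex[OF T, of "Comp C (Comp C p1 j) l1" "Comp C (Comp C p2 j) l2"] ty0 tyL Geq by auto
  have tyG: "G \<in> Ar C" "Dom C G = L" "Cod C G = T" using G(1-3) ty0 tyL by simp_all
  have R2: "\<And>x. x \<in> Ar C \<Longrightarrow> Cod C x = L \<Longrightarrow> Comp C p1 (Comp C G x) = Comp C p1 (Comp C j (Comp C l1 x))"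
    using ext2[OF G(4)] ty0 tyL tyG by simp
  have R3: "\<And>x. x \<in> Ar C \<Longrightarrow> Cod C x = L \<Longrightarrow> Comp C p2 (Comp C G x) = Comp C p2 (Comp C j (Comp C l2 x))"
    using ext2[OF G(5)] ty0 tyL tyG by simp
  obtain S0 \<sigma> \<tau> where Spb: "pullback C j G S0 \<sigma> \<tau>" using fl_pb[OF lim j(1) tyG(1)] j(2) tyG(3) by auto
  note SF = pb_facts[OF Spb]
  have tyS: "\<sigma> \<in> Ar C" "Dom C \<sigma> = S0" "Cod C \<sigma> = Dom C j" "\<tau> \<in> Ar C" "Dom C \<tau> = S0" "Cod C \<tau> = L"
    using SF(4-9) tyG by simp_all
  have R1: "\<And>x. x \<in> Ar C \<Longrightarrow> Cod C x = S0 \<Longrightarrow> Comp C j (Comp C \<sigma> x) = Comp C G (Comp C \<tau> x)"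
    using ext2[OF SF(10)] ty0 tyS tyG by simp
  have jeq: "\<And>z z'. z \<in> Ar C \<Longrightarrow> z' \<in> Ar C \<Longrightarrow> Dom C z = Dom C z' \<Longrightarrow> Cod C z = Dom C j \<Longrightarrow> Cod C z' = Dom C j
     \<Longrightarrow> Comp C p1 (Comp C j z) = Comp C p1 (Comp C j z') \<Longrightarrow> Comp C p2 (Comp C j z) = Comp C p2 (Comp C j z') \<Longrightarrow> z = z'"
  proof -
    fix z z' assume z: "z \<in> Ar C" "z' \<in> Ar C" "Dom C z = Dom C z'" "Cod C z = Dom C j" "Cod C z' = Dom C j"
      "Comp C p1 (Comp C j z) = Comp C p1 (Comp C j z')" "Comp C p2 (Comp C j z) = Comp C p2 (Comp C j z')"
    have "Comp C j z = Comp C j z'"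
      by (rule pb_uniq[OF T]) (use z ty0 in simp_all)
    then show "z = z'" by (rule mono[rotated 5]) (use z in simp_all)
  qed
  define r1 where "r1 = Comp C l1 \<tau>"
  define r2 where "r2 = Comp C l2 \<tau>"
  have tyr: "r1 \<in> Ar C" "Dom C r1 = S0" "Cod C r1 = Dom C j" "r2 \<in> Ar C" "Dom C r2 = S0" "Cod C r2 = Dom C j"
    unfolding r1_def r2_def using tyS tyL by simp_all
  have mem_intro: "\<And>x y z. x \<in> Ar C \<Longrightarrow> y \<in> Ar C \<Longrightarrow> z \<in> Ar C \<Longrightarrow> Dom C y = Dom C x \<Longrightarrow> Dom C z = Dom C x \<Longrightarrow>
     Cod C x = Dom C j \<Longrightarrow> Cod C y = Dom C j \<Longrightarrow> Cod C z = Dom C j \<Longrightarrow>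
     Comp C e (Comp C p1 (Comp C j x)) = Comp C e (Comp C p1 (Comp C j y)) \<Longrightarrow>
     Comp C p1 (Comp C j z) = Comp C p1 (Comp C j x) \<Longrightarrow> Comp C p2 (Comp C j z) = Comp C p2 (Comp C j y) \<Longrightarrow>
     rel_mem C r1 r2 x y"
  proof -
    fix x y z assume xyz: "x \<in> Ar C" "y \<in> Ar C" "z \<in> Ar C" "Dom C y = Dom C x" "Dom C z = Dom C x"
     "Cod C x = Dom C j" "Cod C y = Dom C j" "Cod C z = Dom C j"
     "Comp C e (Comp C p1 (Comp C j x)) = Comp C e (Comp C p1 (Comp C j y))"
     "Comp C p1 (Comp C j z) = Comp C p1 (Comp C j x)" "Comp C p2 (Comp C j z) = Comp C p2 (Comp C j y)"
    have ex: "Comp C ?eps x = Comp C ?eps y"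
      using xyz(9) assoc[of x "Comp C p1 j" e] assoc[of x j p1] assoc[of y "Comp C p1 j" e] assoc[of y j p1] ty0 xyz(1-7) by simp
    obtain w where w: "w \<in> Ar C" "Dom C w = Dom C x" "Cod C w = L" "Comp C l1 w = x" "Comp C l2 w = y"
      using pb_ex[OF Lpb xyz(1,2) _ _ _ ex] xyz(4,6,7) epst by auto
    have jz: "Comp C j z = Comp C G w"
    proof (rule pb_uniq[OF T])
      show "Comp C p1 (Comp C j z) = Comp C p1 (Comp C G w)"
        using xyz(10) R2[OF w(1,3)] w(4) by simp
      show "Comp C p2 (Comp C j z) = Comp C p2 (Comp C G w)"
        using xyz(11) R3[OF w(1,3)] w(5) by simp
    qed (use xyz ty0 tyG w in simp_all)
    obtain h where h: "h \<in> Ar C" "Dom C h = Dom C z" "Cod C h = S0" "Comp C \<sigma> h = z" "Comp C \<tau> h = w"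
      using pb_ex[OF Spb xyz(3) w(1) _ _ _ jz] xyz(5,8) w(2,3) tyG by auto
    have "Comp C r1 h = x" unfolding r1_def using assoc[of h \<tau> l1] tyS tyL h w(4) by simp
    moreover have "Comp C r2 h = y" unfolding r2_def using assoc[of h \<tau> l2] tyS tyL h w(5) by simp
    ultimately show "rel_mem C r1 r2 x y" unfolding rel_mem_def using h tyr by auto
  qed
  have mem_elim: "\<And>x y. rel_mem C r1 r2 x y \<Longrightarrow> \<exists>z. z \<in> Ar C \<and> Dom C z = Dom C x \<and> Cod C z = Dom C j \<and>
      Comp C p1 (Comp C j z) = Comp C p1 (Comp C j x) \<and> Comp C p2 (Comp C j z) = Comp C p2 (Comp C j y)"
  proof -
    fix x y assume "rel_mem C r1 r2 x y"
    then obtain h where h: "h \<in> Ar C" "Cod C h = S0" "Comp C r1 h = x" "Comp C r2 h = y"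
      unfolding rel_mem_def using tyr by auto
    have hx: "Comp C l1 (Comp C \<tau> h) = x" using h(3) assoc[of h \<tau> l1] tyS tyL h(1,2) unfolding r1_def by simp
    have hy: "Comp C l2 (Comp C \<tau> h) = y" using h(4) assoc[of h \<tau> l2] tyS tyL h(1,2) unfolding r2_def by simp
    have th: "Comp C \<tau> h \<in> Ar C" "Cod C (Comp C \<tau> h) = L" using tyS h by simp_all
    have dx: "Dom C x = Dom C h" using hx[symmetric] tyS tyL h by simp
    have z: "Comp C \<sigma> h \<in> Ar C" "Dom C (Comp C \<sigma> h) = Dom C x" "Cod C (Comp C \<sigma> h) = Dom C j"
      using tyS h dx by simp_all
    have "Comp C p1 (Comp C j (Comp C \<sigma> h)) = Comp C p1 (Comp C j x)"
      using R1[OF h(1,2)] R2[OF th] hx by simp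
    moreover have "Comp C p2 (Comp C j (Comp C \<sigma> h)) = Comp C p2 (Comp C j y)"
      using R1[OF h(1,2)] R3[OF th] hy by simp
    ultimately show "\<exists>z. z \<in> Ar C \<and> Dom C z = Dom C x \<and> Cod C z = Dom C j \<and>
      Comp C p1 (Comp C j z) = Comp C p1 (Comp C j x) \<and> Comp C p2 (Comp C j z) = Comp C p2 (Comp C j y)"
      using z by blast
  qed
  have rel: "relation_on C (Dom C j) r1 r2"
    unfolding relation_on_def
  proof (intro conjI allI impI)
    show "r1 \<in> hom C (Dom C r1) (Dom C j)" "r2 \<in> hom C (Dom C r1) (Dom C j)" using tyr by (simp_all add: hom_iff)
    fix g h assume gh: "g \<in> Ar C" "h \<in> Ar C" "Dom C g = Dom C h" "Cod C g = Dom C r1" "Cod C h = Dom C r1"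
      "Comp C r1 g = Comp C r1 h" "Comp C r2 g = Comp C r2 h"
    have gh': "Cod C g = S0" "Cod C h = S0" using gh(4,5) tyr by simp_all
    have t: "Comp C \<tau> g = Comp C \<tau> h"
    proof (rule pb_uniq[OF Lpb])
      show "Comp C l1 (Comp C \<tau> g) = Comp C l1 (Comp C \<tau> h)"
        using gh(6) assoc[of g \<tau> l1] assoc[of h \<tau> l1] tyS tyL gh(1,2) gh' unfolding r1_def by simp
      show "Comp C l2 (Comp C \<tau> g) = Comp C l2 (Comp C \<tau> h)"
        using gh(7) assoc[of g \<tau> l2] assoc[of h \<tau> l2] tyS tyL gh(1,2) gh' unfolding r2_def by simp
    qed (use tyS gh gh' in simp_all)
    have s: "Comp C \<sigma> g = Comp C \<sigma> h"
    proof (rule mono)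
      show "Comp C j (Comp C \<sigma> g) = Comp C j (Comp C \<sigma> h)"
        using R1[OF gh(1) gh'(1)] R1[OF gh(2) gh'(2)] t by simp
    qed (use tyS gh gh' in simp_all)
    show "g = h" by (rule pb_uniq[OF Spb]) (use s t tyS gh gh' in simp_all)
  qed
  have refl: "reflexive_rel C (Dom C j) r1 r2"
  proof -
    have Ob: "Dom C j \<in> Ob C" using j by simp
    obtain \<delta> where \<delta>: "\<delta> \<in> Ar C" "Dom C \<delta> = Dom C j" "Cod C \<delta> = L" "Comp C l1 \<delta> = Id C (Dom C j)"
        "Comp C l2 \<delta> = Id C (Dom C j)"
      using pb_ex[OF Lpb, of "Id C (Dom C j)" "Id C (Dom C j)"] Ob epst by auto
    have Gd: "Comp C j (Id C (Dom C j)) = Comp C G \<delta>"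
    proof (rule pb_uniq[OF T])
      show "Comp C p1 (Comp C j (Id C (Dom C j))) = Comp C p1 (Comp C G \<delta>)"
        using R2[OF \<delta>(1,3)] \<delta>(4) j Ob by simp
      show "Comp C p2 (Comp C j (Id C (Dom C j))) = Comp C p2 (Comp C G \<delta>)"
        using R3[OF \<delta>(1,3)] \<delta>(5) j Ob by simp
    qed (use j Ob tyG \<delta> in simp_all)
    obtain d where d: "d \<in> Ar C" "Dom C d = Dom C j" "Cod C d = S0" "Comp C \<sigma> d = Id C (Dom C j)"
        "Comp C \<tau> d = \<delta>"
      using pb_ex[OF Spb _ \<delta>(1) _ _ _ Gd] Ob j \<delta> tyG by auto
    have "Comp C r1 d = Id C (Dom C j)" unfolding r1_def using assoc[of d \<tau> l1] d tyS tyL \<delta> by simp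
    moreover have "Comp C r2 d = Id C (Dom C j)" unfolding r2_def using assoc[of d \<tau> l2] d tyS tyL \<delta> by simp
    moreover have "d \<in> hom C (Dom C j) (Dom C r1)" using d tyr by (simp add: hom_iff)
    ultimately show ?thesis unfolding reflexive_rel_def by blast
  qed
  have M: "\<forall>X r1 r2. relation_on C X r1 r2 \<longrightarrow> reflexive_rel C X r1 r2 \<longrightarrow>
        symmetric_rel C r1 r2 \<and> transitive_rel C r1 r2"
    using mal unfolding maltsev_def by (elim conjE)
  have trans: "transitive_rel C r1 r2" using M rel refl by blast
  have S1p1: "\<And>x. x \<in> Ar C \<Longrightarrow> Cod C x = Dom C e \<Longrightarrow> Comp C p1 (Comp C j (Comp C s1 x)) = x"
    using ext3[OF s1(4)] ty0 by simp
  have S1p2: "\<And>x. x \<in> Ar C \<Longrightarrow> Cod C x = Dom C e \<Longrightarrow> Comp C p2 (Comp C j (Comp C s1 x)) = Comp C b1 (Comp C e x)"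
    using ext3[OF s1(5)] ty0 by simp
  have S2p1: "\<And>x. x \<in> Ar C \<Longrightarrow> Cod C x = Dom C e' \<Longrightarrow> Comp C p1 (Comp C j (Comp C s2 x)) = Comp C a1 (Comp C e' x)"
    using ext3[OF s2(4)] ty0 by simp
  have S2p2: "\<And>x. x \<in> Ar C \<Longrightarrow> Cod C x = Dom C e' \<Longrightarrow> Comp C p2 (Comp C j (Comp C s2 x)) = x"
    using ext3[OF s2(5)] ty0 by simp
  have A1: "\<And>x. x \<in> Ar C \<Longrightarrow> Cod C x = Cod C e \<Longrightarrow> Comp C e (Comp C a1 x) = x"
    using ext2[OF a1(4)] ty0 by simp
  have E: "Comp C e p1 = Comp C e' p2" using TF(10) .
  have Z: "Comp C e p1 \<in> Ar C" "Dom C (Comp C e p1) = T" "Cod C (Comp C e p1) = Cod C e"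
    "Comp C a1 (Comp C e p1) \<in> Ar C" "Dom C (Comp C a1 (Comp C e p1)) = T" "Cod C (Comp C a1 (Comp C e p1)) = Dom C e"
    "Comp C e' p2 \<in> Ar C" "Cod C (Comp C e' p2) = Cod C e"
    using ty0 by simp_all
  define X1 where "X1 = Comp C s1 p1"
  define X2 where "X2 = Comp C s1 (Comp C a1 (Comp C e p1))"
  define X3 where "X3 = Comp C s2 p2"
  have tX: "X1 \<in> Ar C" "Dom C X1 = T" "Cod C X1 = Dom C j"
    "X2 \<in> Ar C" "Dom C X2 = T" "Cod C X2 = Dom C j"
    "X3 \<in> Ar C" "Dom C X3 = T" "Cod C X3 = Dom C j"
    unfolding X1_def X2_def X3_def using ty0 Z by simp_all
  have X1a: "Comp C p1 (Comp C j X1) = p1" "Comp C p2 (Comp C j X1) = Comp C b1 (Comp C e' p2)"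
    unfolding X1_def using S1p1[of p1] S1p2[of p1] ty0 E by simp_all
  have X2a: "Comp C p1 (Comp C j X2) = Comp C a1 (Comp C e' p2)" "Comp C p2 (Comp C j X2) = Comp C b1 (Comp C e' p2)"
    unfolding X2_def using S1p1[OF Z(4,6)] S1p2[OF Z(4,6)] A1[OF Z(1,3)] E by simp_all
  have X3a: "Comp C p1 (Comp C j X3) = Comp C a1 (Comp C e' p2)" "Comp C p2 (Comp C j X3) = p2"
    unfolding X3_def using S2p1[of p2] S2p2[of p2] ty0 by simp_all
  have eX1: "Comp C e (Comp C p1 (Comp C j X1)) = Comp C e' p2" using X1a E by simp
  have eX2: "Comp C e (Comp C p1 (Comp C j X2)) = Comp C e' p2" using X2a A1[OF Z(7,8)] by simp
  have eX3: "Comp C e (Comp C p1 (Comp C j X3)) = Comp C e' p2" using X3a A1[OF Z(7,8)] by simp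
  have r12: "rel_mem C r1 r2 X1 X2"
    by (rule mem_intro[of X1 X2 X1]) (use tX eX1 eX2 X1a X2a in simp_all)
  have r23: "rel_mem C r1 r2 X2 X3"
    by (rule mem_intro[of X2 X3 X3]) (use tX eX2 eX3 X2a X3a in simp_all)
  have "rel_mem C r1 r2 X1 X3" using trans r12 r23 unfolding transitive_rel_def by blast
  then obtain z where z: "z \<in> Ar C" "Dom C z = Dom C X1" "Cod C z = Dom C j"
      "Comp C p1 (Comp C j z) = Comp C p1 (Comp C j X1)" "Comp C p2 (Comp C j z) = Comp C p2 (Comp C j X3)"
    using mem_elim by blast
  have TO: "T \<in> Ob C" using tys(4,5) dom_ob by metis
  have "Comp C j z = Id C T"
    by (rule pb_uniq[OF T]) (use z tX X1a X3a ty0 TO in simp_all)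
  then show ?thesis using z tX by auto
qed

end



context cctx begin

lemma cop2_facts:
  assumes "coproduct2 C A B S i1 i2"
  shows "i1 \<in> Ar C" "Dom C i1 = A" "Cod C i1 = S" "i2 \<in> Ar C" "Dom C i2 = B" "Cod C i2 = S"
proof -
  have "i1 \<in> hom C A S \<and> i2 \<in> hom C B S" using assms unfolding coproduct2_def by blast
  then show "i1 \<in> Ar C" "Dom C i1 = A" "Cod C i1 = S" "i2 \<in> Ar C" "Dom C i2 = B" "Cod C i2 = S"
    unfolding hom_iff by simp_all
qed

lemma cop2_ex:
  assumes "coproduct2 C A B S i1 i2" "f \<in> hom C A Z" "g \<in> hom C B Z"
  shows "\<exists>u. u \<in> Ar C \<and> Dom C u = S \<and> Cod C u = Z \<and> Comp C u i1 = f \<and> Comp C u i2 = g"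
proof -
  have H: "\<forall>T f g. f \<in> hom C A T \<longrightarrow> g \<in> hom C B T \<longrightarrow>
        (\<exists>!u. u \<in> hom C S T \<and> Comp C u i1 = f \<and> Comp C u i2 = g)"
    using assms(1) unfolding coproduct2_def by blast
  have "\<exists>!u. u \<in> hom C S Z \<and> Comp C u i1 = f \<and> Comp C u i2 = g" using H assms(2,3) by blast
  then show ?thesis unfolding hom_iff by blast
qed

lemma cop2_uniq:
  assumes "coproduct2 C A B S i1 i2" "x \<in> Ar C" "y \<in> Ar C" "Dom C x = S" "Dom C y = S" "Cod C y = Cod C x"
    "Comp C x i1 = Comp C y i1" "Comp C x i2 = Comp C y i2"
  shows "x = y"
proof -
  note F = cop2_facts[OF assms(1)]
  have H: "\<forall>T f g. f \<in> hom C A T \<longrightarrow> g \<in> hom C B T \<longrightarrow>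
        (\<exists>!u. u \<in> hom C S T \<and> Comp C u i1 = f \<and> Comp C u i2 = g)"
    using assms(1) unfolding coproduct2_def by blast
  have a: "Comp C x i1 \<in> hom C A (Cod C x)" "Comp C x i2 \<in> hom C B (Cod C x)"
    using F assms by (simp_all add: hom_iff)
  have U: "\<exists>!u. u \<in> hom C S (Cod C x) \<and> Comp C u i1 = Comp C x i1 \<and> Comp C u i2 = Comp C x i2"
    using H a by blast
  have X: "x \<in> hom C S (Cod C x)" "y \<in> hom C S (Cod C x)" using assms by (simp_all add: hom_iff)
  show ?thesis using U X assms(7,8) by (metis (no_types, lifting))
qed

lemma cop3_facts:
  assumes "coproduct3 C A B D S i1 i2 i3"
  shows "i1 \<in> Ar C" "Dom C i1 = A" "Cod C i1 = S" "i2 \<in> Ar C" "Dom C i2 = B" "Cod C i2 = S"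
    "i3 \<in> Ar C" "Dom C i3 = D" "Cod C i3 = S"
proof -
  have "i1 \<in> hom C A S \<and> i2 \<in> hom C B S \<and> i3 \<in> hom C D S" using assms unfolding coproduct3_def by blast
  then show "i1 \<in> Ar C" "Dom C i1 = A" "Cod C i1 = S" "i2 \<in> Ar C" "Dom C i2 = B" "Cod C i2 = S"
    "i3 \<in> Ar C" "Dom C i3 = D" "Cod C i3 = S"
    unfolding hom_iff by simp_all
qed

end

theorem lemma2p2:
  fixes C :: "('o, 'm) cat"
  assumes reg: "regular_category C" and mal: "maltsev C" and pt: "pointed C"
    and lim: "has_finite_limits C" and colim: "has_finite_colimits C"
    and objs: "W \<in> Ob C" "X \<in> Ob C" "Y \<in> Ob C"
    \<comment> \<open>W + X + Y with injections i1, i2, i3\<close>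
    and S: "coproduct3 C W X Y S i1 i2 i3"
    \<comment> \<open>W + X with injections a1, a2 and W + Y with injections b1, b2\<close>
    and P: "coproduct2 C W X P a1 a2"
    and Q: "coproduct2 C W Y Q b1 b2"
    \<comment> \<open>e = [1,0] : W + X \<rightarrow> W and e' = [1,0] : W + Y \<rightarrow> W\<close>
    and e: "e \<in> hom C P W" "Comp C e a1 = Id C W" "zero_mor C (Comp C e a2)"
    and e': "e' \<in> hom C Q W" "Comp C e' b1 = Id C W" "zero_mor C (Comp C e' b2)"
    \<comment> \<open>T = (W + X) \<times>_W (W + Y) with projections p1, p2\<close>
    and T: "pullback C e e' T p1 p2"
    \<comment> \<open>u = [i1, i2, 0] and v = [i1, 0, i2]\<close>
    and u: "u \<in> hom C S P" "Comp C u i1 = a1" "Comp C u i2 = a2" "zero_mor C (Comp C u i3)"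
    and v: "v \<in> hom C S Q" "Comp C v i1 = b1" "zero_mor C (Comp C v i2)" "Comp C v i3 = b2"
    \<comment> \<open>m = \<langle>u, v\<rangle>\<close>
    and m: "m \<in> hom C S T" "Comp C p1 m = u" "Comp C p2 m = v"
  shows "regular_epi C m \<and> (normal_category C \<longrightarrow> normal_epi C m)"
proof -
  have cat: "category C" using reg unfolding regular_category_def by (elim conjE)
  interpret cctx C by (rule cctx.intro[OF cat])
  note SF = cop3_facts[OF S] and PF = cop2_facts[OF P] and QF = cop2_facts[OF Q] and TF = pb_facts[OF T]
  have te: "e \<in> Ar C" "Dom C e = P" "Cod C e = W" "e' \<in> Ar C" "Dom C e' = Q" "Cod C e' = W"
    using e(1) e'(1) by (simp_all add: hom_iff)
  have tu: "u \<in> Ar C" "Dom C u = S" "Cod C u = P" "v \<in> Ar C" "Dom C v = S" "Cod C v = Q"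
    "m \<in> Ar C" "Dom C m = S" "Cod C m = T"
    using u(1) v(1) m(1) by (simp_all add: hom_iff)
  have tp: "p1 \<in> Ar C" "Dom C p1 = T" "Cod C p1 = P" "p2 \<in> Ar C" "Dom C p2 = T" "Cod C p2 = Q"
    using TF(4-9) te by simp_all
  note ty = te tu tp SF PF QF objs
  have PO: "P \<in> Ob C" "Q \<in> Ob C" "T \<in> Ob C"
    using dom_ob[OF te(1)] dom_ob[OF te(4)] cod_ob[OF tu(7)] te tu by simp_all
  obtain c1 where c1: "c1 \<in> Ar C" "Dom C c1 = P" "Cod C c1 = S" "Comp C c1 a1 = i1" "Comp C c1 a2 = i2"
    using cop2_ex[OF P, of i1 S i2] SF by (auto simp: hom_iff)
  obtain c2 where c2: "c2 \<in> Ar C" "Dom C c2 = Q" "Cod C c2 = S" "Comp C c2 b1 = i1" "Comp C c2 b2 = i3"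
    using cop2_ex[OF Q, of i1 S i3] SF by (auto simp: hom_iff)
  have uc1: "Comp C u c1 = Id C P"
  proof (rule cop2_uniq[OF P])
    show "Comp C (Comp C u c1) a1 = Comp C (Id C P) a1" using assoc[of a1 c1 u] c1 ty PO u(2) by simp
    show "Comp C (Comp C u c1) a2 = Comp C (Id C P) a2" using assoc[of a2 c1 u] c1 ty PO u(3) by simp
  qed (use c1 ty PO in simp_all)
  have vc1: "Comp C v c1 = Comp C b1 e"
  proof (rule cop2_uniq[OF P])
    show "Comp C (Comp C v c1) a1 = Comp C (Comp C b1 e) a1"
      using assoc[of a1 c1 v] assoc[of a1 e b1] c1 ty v(2) e(2) by simp
    have z1: "zero_mor C (Comp C v i2)" by (rule v(3))
    have z2: "zero_mor C (Comp C b1 (Comp C e a2))" by (rule zero_post[OF e(3)]) (use ty in simp_all)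
    have "Comp C v i2 = Comp C b1 (Comp C e a2)" by (rule zero_unique[OF z1 z2]) (use ty in simp_all)
    then show "Comp C (Comp C v c1) a2 = Comp C (Comp C b1 e) a2"
      using assoc[of a2 c1 v] assoc[of a2 e b1] c1 ty by simp
  qed (use c1 ty in simp_all)
  have uc2: "Comp C u c2 = Comp C a1 e'"
  proof (rule cop2_uniq[OF Q])
    show "Comp C (Comp C u c2) b1 = Comp C (Comp C a1 e') b1"
      using assoc[of b1 c2 u] assoc[of b1 e' a1] c2 ty u(2) e'(2) by simp
    have z1: "zero_mor C (Comp C u i3)" by (rule u(4))
    have z2: "zero_mor C (Comp C a1 (Comp C e' b2))" by (rule zero_post[OF e'(3)]) (use ty in simp_all)
    have "Comp C u i3 = Comp C a1 (Comp C e' b2)" by (rule zero_unique[OF z1 z2]) (use ty in simp_all)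
    then show "Comp C (Comp C u c2) b2 = Comp C (Comp C a1 e') b2"
      using assoc[of b2 c2 u] assoc[of b2 e' a1] c2 ty by simp
  qed (use c2 ty in simp_all)
  have vc2: "Comp C v c2 = Id C Q"
  proof (rule cop2_uniq[OF Q])
    show "Comp C (Comp C v c2) b1 = Comp C (Id C Q) b1" using assoc[of b1 c2 v] c2 ty PO v(2) by simp
    show "Comp C (Comp C v c2) b2 = Comp C (Id C Q) b2" using assoc[of b2 c2 v] c2 ty PO v(4) by simp
  qed (use c2 ty PO in simp_all)
  \<comment> \<open>image factorisation of m\<close>
  obtain K k1 k2 where kp: "pullback C m m K k1 k2" using fl_pb[OF lim tu(7) tu(7)] by blast
  note KP = pb_facts[OF kp]
  obtain q where cq: "coequalizer C k1 k2 q" using reg_coeq[OF reg tu(7) kp] by blast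
  note CQ = coeq_facts[OF cq]
  have mk: "Dom C m = Cod C k1" using KP(6) by simp
  obtain j where j: "j \<in> hom C (Cod C q) (Cod C m)" "Comp C j q = m"
    using coeq_univ[OF cq tu(7) mk KP(10)] by blast
  have tj: "j \<in> Ar C" "Dom C j = Cod C q" "Cod C j = T" using j(1) tu by (simp_all add: hom_iff)
  have tq: "q \<in> Ar C" "Dom C q = S" using CQ(5,6) KP(6) tu by simp_all
  have mono: "\<And>g h. g \<in> Ar C \<Longrightarrow> h \<in> Ar C \<Longrightarrow> Dom C g = Dom C h \<Longrightarrow> Cod C g = Dom C j \<Longrightarrow>
        Cod C h = Dom C j \<Longrightarrow> Comp C j g = Comp C j h \<Longrightarrow> g = h"
    using image_mono[OF reg kp cq tj(1,2) j(2)] tj(2) by metis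
  have mc1: "Comp C j (Comp C q c1) = Comp C m c1" using assoc[of c1 q j] tj tq c1 j(2) by simp
  have mc2: "Comp C j (Comp C q c2) = Comp C m c2" using assoc[of c2 q j] tj tq c2 j(2) by simp
  obtain t where t: "t \<in> Ar C" "Dom C t = T" "Cod C t = Dom C j" "Comp C j t = Id C T"
  proof -
    have "\<exists>t. t \<in> Ar C \<and> Dom C t = T \<and> Cod C t = Dom C j \<and> Comp C j t = Id C T"
    proof (rule maltsev_sub[OF mal T _ _ _ _ _ _ _ _ tj(1,3) mono, of a1 b1 "Comp C q c1" "Comp C q c2"])
      show "Comp C p1 (Comp C j (Comp C q c1)) = Id C (Dom C e)"
        using mc1 assoc[of c1 m p1] m(2) uc1 ty c1 by simp
      show "Comp C p2 (Comp C j (Comp C q c1)) = Comp C b1 e"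
        using mc1 assoc[of c1 m p2] m(3) vc1 ty c1 by simp
      show "Comp C p1 (Comp C j (Comp C q c2)) = Comp C a1 e'"
        using mc2 assoc[of c2 m p1] m(2) uc2 ty c2 by simp
      show "Comp C p2 (Comp C j (Comp C q c2)) = Id C (Dom C e')"
        using mc2 assoc[of c2 m p2] m(3) vc2 ty c2 by simp
    qed (use ty e(2) e'(2) c1 c2 tq tj in simp_all)
    then show ?thesis using that by blast
  qed
  have Ob: "Dom C j \<in> Ob C" using dom_ob[OF tj(1)] .
  have tjj: "Comp C t j = Id C (Dom C j)"
  proof (rule mono)
    show "Comp C j (Comp C t j) = Comp C j (Id C (Dom C j))"
      using assoc[of j t j] t tj Ob by simp
  qed (use t tj Ob in simp_all)
  have coeq: "coequalizer C k1 k2 m"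
    unfolding coequalizer_def
  proof (intro conjI ballI impI)
    show "k1 \<in> Ar C" "k2 \<in> Ar C" "Dom C k1 = Dom C k2" "Cod C k1 = Cod C k2" "m \<in> Ar C"
      "Dom C m = Cod C k1" "Comp C m k1 = Comp C m k2"
      by (rule CQ(1), rule CQ(2), rule CQ(3), rule CQ(4), rule tu(7), rule mk, rule KP(10))
    fix h assume h: "h \<in> Ar C" "Dom C h = Cod C k1" "Comp C h k1 = Comp C h k2"
    obtain u' where u': "u' \<in> hom C (Cod C q) (Cod C h)" "Comp C u' q = h"
      using coeq_univ[OF cq h] by blast
    have tu': "u' \<in> Ar C" "Dom C u' = Cod C q" "Cod C u' = Cod C h" using u'(1) by (simp_all add: hom_iff)
    show "\<exists>!x. x \<in> hom C (Cod C m) (Cod C h) \<and> Comp C x m = h"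
    proof (rule ex1I[of _ "Comp C u' t"])
      have "Comp C (Comp C u' t) m = Comp C u' (Comp C t m)"
        using assoc[of m t u'] t tu' tj tu by simp
      also have "\<dots> = Comp C u' (Comp C t (Comp C j q))" using j(2) by simp
      also have "\<dots> = Comp C u' (Comp C (Comp C t j) q)"
        using assoc[of q j t] t tj tq by simp
      also have "\<dots> = h" using tjj tq tj u'(2) by simp
      finally show "Comp C u' t \<in> hom C (Cod C m) (Cod C h) \<and> Comp C (Comp C u' t) m = h"
        using t tu' tj tu by (simp add: hom_iff)
    next
      fix x assume x: "x \<in> hom C (Cod C m) (Cod C h) \<and> Comp C x m = h"
      have tx: "x \<in> Ar C" "Dom C x = T" "Cod C x = Cod C h" using x tu by (simp_all add: hom_iff)
      have xj: "Comp C x j = u'"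
      proof (rule coeq_epi[OF cq])
        show "Comp C (Comp C x j) q = Comp C u' q"
          using assoc[of q j x] x tx tj tq j(2) u'(2) by simp
      qed (use tx tj tu' in simp_all)
      have "x = Comp C x (Comp C j t)" using t tx by simp
      also have "\<dots> = Comp C (Comp C x j) t" using assoc[of t j x] t tj tx by simp
      finally show "x = Comp C u' t" using xj by simp
    qed
  qed
  have re: "regular_epi C m" unfolding regular_epi_def using coeq by blast
  moreover have "normal_category C \<longrightarrow> normal_epi C m"
    using re unfolding normal_category_def by blast
  ultimately show ?thesis by blast
qed


end
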